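(* Consider the queueing system in the context under the MaxWeight policy with a diagonal matrix $\Delta$ with positive diagonal entries, in overload ($\rho\notin\mathcal{P}$). Then the vector $\eta=\lim_{t\to\infty}X(t)/t$ is the unique minimizer of $$\langle\eta,\Delta\eta\rangle=\min_{\eta'\in\Psi(\rho,\mathcal{S})}\langle\eta',\Delta\eta'\rangle,\qquad \Psi(\rho,\mathcal{S})=\Big\{(\rho-r)^+: r=\sum_{S\in\mathcal{S}}\alpha_SS,\ \alpha_S\ge0,\ \sum_{S\in\mathcal{S}}\alpha_S\le1\Big\}.$$
   Context: Model: $Q$ queues, finite set $\mathcal{S}=\{S_1,\dots,S_N\}\subset\mathbb{R}^Q_{\ge0}$ of service vectors, discrete time. Arrivals $A(t)$ with $0\le A_q(t)\le\bar A_q<\infty$ and $\rho_q=\lim_{t\to\infty}\frac1t\sum_{s=0}^{t-1}A_q(s)\in(0,\infty)$. Departures $D_q(t)=\min\{S_q(t),X_q(t)\}$, $X(t+1)=X(t)+A(t)-D(t)$, $X(0)=0$, with $S(t)\in\arg\max_{S\in\mathcal{S}}\langle S,\Delta X(t)\rangle$. $(x)^+$ is the componentwise positive part. Stability region $\mathcal{P}=\{r\in\mathbb{R}^Q_{\ge0}: r\le\sum_n\alpha_nS_n\text{ for some }\alpha_n\ge0,\sum_n\alpha_n=1\}$. (Under these assumptions the limit $\lim_t X(t)/t$ exists.) *)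

theory Defs
  imports "HOL-Analysis.Analysis"
begin

text \<open>Vectors in R^Q are modelled as real^'q with 'q a finite index type (the queues).\<close>

definition pos_part :: "real^'q \<Rightarrow> real^'q" where
  "pos_part x = (\<chi> q. max 0 (x $ q))"

definition stab_region :: "(real^'q) set \<Rightarrow> (real^'q) set" where
  "stab_region SS = {r. (\<forall>q. 0 \<le> r $ q) \<and>
     (\<exists>\<alpha>. (\<forall>S\<in>SS. 0 \<le> \<alpha> S) \<and> (\<Sum>S\<in>SS. \<alpha> S) = 1 \<and>
          (\<forall>q. r $ q \<le> (\<Sum>S\<in>SS. \<alpha> S *\<^sub>R S) $ q))}"

definition Psi :: "real^'q \<Rightarrow> (real^'q) set \<Rightarrow> (real^'q) set" where
  "Psi \<rho> SS = {pos_part (\<rho> - r) | r. \<exists>\<alpha>. (\<forall>S\<in>SS. 0 \<le> \<alpha> S) \<and> (\<Sum>S\<in>SS. \<alpha> S) \<le> 1 \<and>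
          r = (\<Sum>S\<in>SS. \<alpha> S *\<^sub>R S)}"

end

theory Submission
  imports Defs "HOL-Real_Asymp.Real_Asymp"
begin

lemma diag_mv:
  fixes \<Delta> :: "real^'q::finite^'q"
  assumes "\<forall>i j. i \<noteq> j \<longrightarrow> \<Delta> $ i $ j = 0"
  shows "\<Delta> *v x = (\<chi> i. \<Delta> $ i $ i * x $ i)"
proof -
  have "(\<Sum>j\<in>UNIV. \<Delta> $ i $ j * x $ j) = \<Delta> $ i $ i * x $ i" for i
  proof -
    have "(\<Sum>j\<in>UNIV. \<Delta> $ i $ j * x $ j) = (\<Sum>j\<in>UNIV. if j = i then \<Delta> $ i $ i * x $ i else 0)"
      by (rule sum.cong) (use assms in auto)
    also have "\<dots> = \<Delta> $ i $ i * x $ i" by simp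
    finally show ?thesis .
  qed
  then show ?thesis by (simp add: vec_eq_iff matrix_vector_mult_def)
qed

lemma inner_vec_sum: "(x::real^'q::finite) \<bullet> y = (\<Sum>i\<in>UNIV. x $ i * y $ i)"
  by (simp add: inner_vec_def)

lemma cesaro_lb:
  fixes g :: "nat \<Rightarrow> real"
  assumes lim: "(\<lambda>t. (1 / real t) * (\<Sum>s<t. g s)) \<longlonglongrightarrow> L"
    and nn: "\<And>s. 0 \<le> g s" and ge: "\<And>s. s \<ge> K \<Longrightarrow> c \<le> g s" and c: "0 < c"
  shows "c \<le> L"
proof -
  have lim2: "(\<lambda>t. (real t - real K) / real t * c) \<longlonglongrightarrow> c" by real_asymp
  have "\<forall>t\<ge>Suc K. (real t - real K) / real t * c \<le> (1 / real t) * (\<Sum>s<t. g s)"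
  proof (intro allI impI)
    fix t assume t: "Suc K \<le> t"
    have "(\<Sum>s\<in>{K..<t}. c) \<le> (\<Sum>s\<in>{K..<t}. g s)" by (rule sum_mono) (auto intro: ge)
    also have "\<dots> \<le> (\<Sum>s<t. g s)"
      by (rule sum_mono2) (auto intro: nn)
    finally have "(real t - real K) * c \<le> (\<Sum>s<t. g s)" using t by (simp add: of_nat_diff)
    moreover have "0 < real t" using t by simp
    ultimately have "((real t - real K) * c) / real t \<le> (\<Sum>s<t. g s) / real t"
      by (intro divide_right_mono) auto
    then show "(real t - real K) / real t * c \<le> (1 / real t) * (\<Sum>s<t. g s)"
      by simp
  qed
  then show ?thesis using LIMSEQ_le[OF lim2 lim] by blast
qed

theorem proposition2:
  fixes SS :: "(real^'q::finite) set"
    and \<Delta> :: "real^'q^'q"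
    and A X Sch :: "nat \<Rightarrow> real^'q"
    and Abar \<rho> \<eta> :: "real^'q"
  assumes SS_fin: "finite SS" and SS_ne: "SS \<noteq> {}"
    and SS_nonneg: "\<forall>S\<in>SS. \<forall>q. 0 \<le> S $ q"
    and Delta_diag: "\<forall>i j. i \<noteq> j \<longrightarrow> \<Delta> $ i $ j = 0"
    and Delta_pos: "\<forall>i. 0 < \<Delta> $ i $ i"
    and A_bnd: "\<forall>t q. 0 \<le> A t $ q \<and> A t $ q \<le> Abar $ q"
    and rho_lim: "(\<lambda>t. (1 / real t) *\<^sub>R (\<Sum>s<t. A s)) \<longlonglongrightarrow> \<rho>"
    and rho_pos: "\<forall>q. 0 < \<rho> $ q"
    and X0: "X 0 = 0"
    and X_step: "\<forall>t. X (Suc t) = X t + A t - (\<chi> q. min (Sch t $ q) (X t $ q))"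
    and Sch_in: "\<forall>t. Sch t \<in> SS"
    and Sch_maxweight: "\<forall>t. \<forall>S\<in>SS. S \<bullet> (\<Delta> *v X t) \<le> Sch t \<bullet> (\<Delta> *v X t)"
    and overload: "\<rho> \<notin> stab_region SS"
    and eta_lim: "(\<lambda>t. (1 / real t) *\<^sub>R X t) \<longlonglongrightarrow> \<eta>"
  shows "\<eta> \<in> Psi \<rho> SS \<and>
         (\<forall>\<eta>'\<in>Psi \<rho> SS. \<eta>' \<noteq> \<eta> \<longrightarrow> \<eta> \<bullet> (\<Delta> *v \<eta>) < \<eta>' \<bullet> (\<Delta> *v \<eta>'))"
proof -
  define d where "d i = \<Delta> $ i $ i" for i
  have mv: "\<And>x. \<Delta> *v x = (\<chi> i. d i * x $ i)" using diag_mv[OF Delta_diag] d_def by simp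
  have dpos: "0 < d i" for i using Delta_pos d_def by simp
  define D where "D s = (\<chi> q. min (Sch s $ q) (X s $ q))" for s
  have Xnn: "0 \<le> X t $ q" for t q
  proof (induction t)
    case 0 then show ?case using X0 by simp
  next
    case (Suc t)
    have "X (Suc t) $ q = X t $ q + A t $ q - min (Sch t $ q) (X t $ q)" using X_step by simp
    moreover have "0 \<le> A t $ q" using A_bnd by blast
    ultimately show ?case using Suc by (auto simp: min_def)
  qed
  have Sch_nn: "0 \<le> Sch s $ q" for s q using Sch_in SS_nonneg by blast
  have Dnn: "0 \<le> D s $ q" for s q using Xnn Sch_nn by (simp add: D_def)
  have DleS: "D s $ q \<le> Sch s $ q" for s q by (simp add: D_def)
  have Xsum: "X t = (\<Sum>s<t. A s) - (\<Sum>s<t. D s)" for t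
  proof (induction t)
    case 0 then show ?case using X0 by simp
  next
    case (Suc t)
    have "X (Suc t) = X t + A t - D t" using X_step by (simp add: D_def)
    then show ?case using Suc by (simp add: algebra_simps)
  qed
  define avg where "avg F t = (1 / real t) *\<^sub>R (\<Sum>s<t. F s)" for F :: "nat \<Rightarrow> real^'q" and t
  have Davg: "(\<lambda>t. avg D t) \<longlonglongrightarrow> \<rho> - \<eta>"
  proof -
    have "avg D t = (1 / real t) *\<^sub>R (\<Sum>s<t. A s) - (1 / real t) *\<^sub>R X t" for t
      by (simp add: avg_def Xsum scaleR_diff_right)
    then show ?thesis using tendsto_diff[OF rho_lim eta_lim] by simp
  qed
  have eta_nn: "0 \<le> \<eta> $ q" for q
  proof -
    have "(\<lambda>t. ((1 / real t) *\<^sub>R X t) $ q) \<longlonglongrightarrow> \<eta> $ q" by (rule tendsto_vec_nth[OF eta_lim])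
    moreover have "\<forall>t. 0 \<le> ((1 / real t) *\<^sub>R X t) $ q" using Xnn by simp
    ultimately show ?thesis by (meson LIMSEQ_le_const)
  qed
  have avgD_comp: "avg D t $ q = (1 / real t) * (\<Sum>s<t. D s $ q)" for t q
    by (simp add: avg_def)
  have rho_eta_nn: "0 \<le> (\<rho> - \<eta>) $ q" for q
  proof -
    have "(\<lambda>t. avg D t $ q) \<longlonglongrightarrow> (\<rho> - \<eta>) $ q" by (rule tendsto_vec_nth[OF Davg])
    moreover have "\<forall>t. 0 \<le> avg D t $ q" using Dnn by (simp add: avgD_comp sum_nonneg)
    ultimately show ?thesis by (meson LIMSEQ_le_const)
  qed
  define B where "B = (\<Sum>S\<in>SS. \<Sum>q\<in>UNIV. S $ q)"
  have SleB: "S $ q \<le> B" if "S \<in> SS" for S q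
  proof -
    have "S $ q \<le> (\<Sum>q\<in>UNIV. S $ q)" using that SS_nonneg by (intro member_le_sum) auto
    also have "\<dots> \<le> B" unfolding B_def using that SS_fin SS_nonneg
      by (intro member_le_sum) (auto intro: sum_nonneg)
    finally show ?thesis .
  qed
  have B_nn: "0 \<le> B" using SleB[OF Sch_in[rule_format, of 0]] Sch_nn[of 0] by (meson order_trans)
  have ev_match: "eventually (\<lambda>s. \<forall>q. 0 < \<eta> $ q \<longrightarrow> D s $ q = Sch s $ q) sequentially"
  proof (rule eventually_all_finite)
    fix q
    show "eventually (\<lambda>s. 0 < \<eta> $ q \<longrightarrow> D s $ q = Sch s $ q) sequentially"
    proof (cases "0 < \<eta> $ q")
      case False then show ?thesis by simp
    next
      case True
      have l: "(\<lambda>t. ((1 / real t) *\<^sub>R X t) $ q) \<longlonglongrightarrow> \<eta> $ q" by (rule tendsto_vec_nth[OF eta_lim])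
      have e1: "eventually (\<lambda>t. \<eta> $ q / 2 < ((1 / real t) *\<^sub>R X t) $ q) sequentially"
        using order_tendstoD(1)[OF l, of "\<eta> $ q / 2"] True by simp
      obtain N0 :: nat where N0: "2 * B / \<eta> $ q < real N0" using reals_Archimedean2 by blast
      have e2: "eventually (\<lambda>t. N0 \<le> t) sequentially" by (rule eventually_ge_at_top)
      show ?thesis using e1 e2
      proof eventually_elim
        case (elim t)
        have tN: "2 * B / \<eta> $ q < real t" using N0 elim(2) by linarith
        have "2 * B < real t * \<eta> $ q" using tN True by (simp add: field_simps)
        moreover have tpos: "0 < real t" using tN B_nn True
          by (smt (verit) divide_nonneg_pos)
        moreover have "\<eta> $ q / 2 < X t $ q / real t" using elim(1) by simp
        ultimately have "B < X t $ q" by (simp add: field_simps)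
        moreover have "Sch t $ q \<le> B" using SleB Sch_in by blast
        ultimately show ?case by (simp add: D_def)
      qed
    qed
  qed
  then obtain N where N: "\<And>s q. N \<le> s \<Longrightarrow> 0 < \<eta> $ q \<Longrightarrow> D s $ q = Sch s $ q"
    unfolding eventually_sequentially by blast
  define e where "e = \<Delta> *v \<eta>"
  have e_comp: "e $ i = d i * \<eta> $ i" for i by (simp add: e_def mv)
  have e_nn: "0 \<le> e $ i" for i using dpos[of i] eta_nn[of i] by (simp add: e_comp)
  have eD: "e \<bullet> D s = e \<bullet> Sch s" if "N \<le> s" for s
    unfolding inner_vec_sum
  proof (rule sum.cong)
    fix i
    show "e $ i * D s $ i = e $ i * Sch s $ i"
    proof (cases "0 < \<eta> $ i")
      case True then show ?thesis using N that by simp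
    next
      case False then have "\<eta> $ i = 0" using eta_nn[of i] by simp
      then show ?thesis by (simp add: e_comp)
    qed
  qed simp
  have e_rho_eta: "0 \<le> e \<bullet> (\<rho> - \<eta>)"
    unfolding inner_vec_sum using e_nn rho_eta_nn by (intro sum_nonneg mult_nonneg_nonneg)
  have key: "S \<bullet> e \<le> e \<bullet> (\<rho> - \<eta>)" if S: "S \<in> SS" for S
  proof -
    define f where "f T y = T \<bullet> (\<Delta> *v y)" for T y
    have fsum: "f T y = (\<Sum>i\<in>UNIV. T $ i * (d i * y $ i))" for T y
      by (simp add: f_def mv inner_vec_sum)
    have flin: "f T (c *\<^sub>R y) = c * f T y" for T c y
      by (simp add: fsum sum_distrib_left algebra_simps)
    have fcont: "(\<lambda>t. f T ((1/real t) *\<^sub>R X t)) \<longlonglongrightarrow> f T \<eta>" for T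
      unfolding fsum by (intro tendsto_intros tendsto_vec_nth[OF eta_lim])
    show ?thesis
    proof (rule field_le_epsilon)
      fix \<epsilon> :: real assume ep: "0 < \<epsilon>"
      have "eventually (\<lambda>t. \<forall>T\<in>SS. \<bar>f T ((1/real t) *\<^sub>R X t) - f T \<eta>\<bar> < \<epsilon>/2) sequentially"
      proof (rule eventually_ball_finite[OF SS_fin], rule ballI)
        fix T
        have "eventually (\<lambda>t. dist (f T ((1/real t) *\<^sub>R X t)) (f T \<eta>) < \<epsilon>/2) sequentially"
          using fcont[of T] ep unfolding tendsto_iff by (meson half_gt_zero)
        then show "eventually (\<lambda>t. \<bar>f T ((1/real t) *\<^sub>R X t) - f T \<eta>\<bar> < \<epsilon>/2) sequentially"
          by (simp add: dist_real_def)
      qed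
      then obtain K where K: "\<And>t T. K \<le> t \<Longrightarrow> T \<in> SS \<Longrightarrow> \<bar>f T ((1/real t) *\<^sub>R X t) - f T \<eta>\<bar> < \<epsilon>/2"
        unfolding eventually_sequentially by blast
      show "S \<bullet> e \<le> e \<bullet> (\<rho> - \<eta>) + \<epsilon>"
      proof (cases "S \<bullet> e - \<epsilon> \<le> 0")
        case True then show ?thesis using e_rho_eta by linarith
      next
        case False
        have lim: "(\<lambda>t. (1 / real t) * (\<Sum>s<t. e \<bullet> D s)) \<longlonglongrightarrow> e \<bullet> (\<rho> - \<eta>)"
        proof -
          have "(1 / real t) * (\<Sum>s<t. e \<bullet> D s) = e \<bullet> avg D t" for t
            by (simp add: avg_def inner_sum_right)
          then show ?thesis using tendsto_inner[OF tendsto_const Davg, of e] by simp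
        qed
        have nn: "0 \<le> e \<bullet> D s" for s
          unfolding inner_vec_sum using e_nn Dnn by (intro sum_nonneg mult_nonneg_nonneg)
        have ge: "S \<bullet> e - \<epsilon> \<le> e \<bullet> D s" if s: "max K N \<le> s" for s
        proof -
          have eq: "e \<bullet> D s = f (Sch s) \<eta>" using eD[of s] s by (simp add: f_def e_def inner_commute)
          have mw: "f S ((1/real s) *\<^sub>R X s) \<le> f (Sch s) ((1/real s) *\<^sub>R X s)"
            unfolding flin using Sch_maxweight S by (intro mult_left_mono) (auto simp: f_def)
          have "\<bar>f S ((1/real s) *\<^sub>R X s) - f S \<eta>\<bar> < \<epsilon>/2" using K S s by simp
          moreover have "\<bar>f (Sch s) ((1/real s) *\<^sub>R X s) - f (Sch s) \<eta>\<bar> < \<epsilon>/2"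
            using K Sch_in s by simp
          moreover have "f S \<eta> = S \<bullet> e" by (simp add: f_def e_def)
          ultimately show ?thesis using eq mw by linarith
        qed
        have "S \<bullet> e - \<epsilon> \<le> e \<bullet> (\<rho> - \<eta>)"
          by (rule cesaro_lb[where K="max K N", OF lim nn ge]) (use False in auto)
        then show ?thesis by linarith
      qed
    qed
  qed
  define r where "r t = (1 / real t) *\<^sub>R (\<Sum>s<t. Sch s)" for t
  have r_in: "r (Suc n) \<in> convex hull SS" for n
  proof -
    have "(\<Sum>j\<in>{..<Suc n}. (1/real (Suc n)) *\<^sub>R Sch j) \<in> convex hull SS"
      by (rule convex_sum) (auto simp: hull_subset[THEN subsetD] Sch_in convex_convex_hull)
    then show ?thesis unfolding r_def scaleR_sum_right .
  qed
  have "seq_compact (convex hull SS)"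
    by (intro compact_imp_seq_compact compact_convex_hull finite_imp_compact SS_fin)
  then obtain l \<sigma> where l: "l \<in> convex hull SS" and \<sigma>: "strict_mono \<sigma>"
    and lim_l: "((\<lambda>n. r (Suc n)) \<circ> \<sigma>) \<longlonglongrightarrow> l"
    using r_in unfolding seq_compact_def by meson
  define \<tau> where "\<tau> n = Suc (\<sigma> n)" for n
  have \<tau>: "strict_mono \<tau>" using \<sigma> by (simp add: strict_mono_def \<tau>_def)
  have lim_l': "(\<lambda>n. r (\<tau> n)) \<longlonglongrightarrow> l" using lim_l by (simp add: \<tau>_def o_def)
  have lim_D': "(\<lambda>n. avg D (\<tau> n)) \<longlonglongrightarrow> \<rho> - \<eta>"
    using LIMSEQ_subseq_LIMSEQ[OF Davg \<tau>] by (simp add: o_def)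
  have r_comp: "r t $ q = (1 / real t) * (\<Sum>s<t. Sch s $ q)" for t q
    by (simp add: r_def)
  have comp1: "(\<rho> - \<eta>) $ q \<le> l $ q" for q
  proof (rule LIMSEQ_le[OF tendsto_vec_nth[OF lim_D'] tendsto_vec_nth[OF lim_l']])
    show "\<exists>N. \<forall>n\<ge>N. avg D (\<tau> n) $ q \<le> r (\<tau> n) $ q"
      unfolding avgD_comp r_comp using DleS
      by (intro exI[of _ 0] allI impI mult_left_mono sum_mono) auto
  qed
  have comp2: "(\<rho> - \<eta>) $ q = l $ q" if pos: "0 < \<eta> $ q" for q
  proof -
    define C where "C = (\<Sum>s<N. Sch s $ q - D s $ q)"
    have eq: "r t $ q - avg D t $ q = C / real t" if "N \<le> t" for t
    proof -
      have "(\<Sum>s<t. Sch s $ q - D s $ q) = C" unfolding C_def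
        by (rule sum.mono_neutral_right) (use that N pos in auto)
      then show ?thesis by (simp add: r_comp avgD_comp sum_subtractf diff_divide_distrib[symmetric])
    qed
    have l1: "(\<lambda>n. r (\<tau> n) $ q - avg D (\<tau> n) $ q) \<longlonglongrightarrow> l $ q - (\<rho> - \<eta>) $ q"
      by (intro tendsto_diff tendsto_vec_nth lim_l' lim_D')
    have c0: "(\<lambda>n. C / real (\<tau> n)) \<longlonglongrightarrow> 0"
      using LIMSEQ_subseq_LIMSEQ[OF lim_const_over_n[of C] \<tau>] by (simp add: o_def)
    have l2: "(\<lambda>n. r (\<tau> n) $ q - avg D (\<tau> n) $ q) \<longlonglongrightarrow> 0"
    proof (rule Lim_transform_eventually[OF c0])
      show "eventually (\<lambda>n. C / real (\<tau> n) = r (\<tau> n) $ q - avg D (\<tau> n) $ q) sequentially"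
        using eventually_ge_at_top[of N]
      proof eventually_elim
        case (elim n)
        have "n \<le> \<tau> n" using seq_suble[OF \<tau>] by simp
        then show ?case using eq[of "\<tau> n"] elim by simp
      qed
    qed
    show ?thesis using LIMSEQ_unique[OF l1 l2] by simp
  qed
  obtain \<alpha> where \<alpha>: "\<forall>S\<in>SS. 0 \<le> \<alpha> S" "sum \<alpha> SS = 1" "(\<Sum>S\<in>SS. \<alpha> S *\<^sub>R S) = l"
    using l convex_hull_finite[OF SS_fin] by auto
  have eta_eq: "\<eta> = pos_part (\<rho> - l)"
    unfolding vec_eq_iff pos_part_def
  proof
    fix q
    show "\<eta> $ q = (\<chi> q. max 0 ((\<rho> - l) $ q)) $ q"
    proof (cases "0 < \<eta> $ q")
      case True then show ?thesis using comp2[of q] by simp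
    next
      case False then have "\<eta> $ q = 0" using eta_nn[of q] by simp
      then show ?thesis using comp1[of q] by simp
    qed
  qed
  have inPsi: "\<eta> \<in> Psi \<rho> SS"
    unfolding Psi_def using \<alpha> eta_eq by fastforce
  have mono: "e \<bullet> \<eta> \<le> e \<bullet> \<eta>'" if P: "\<eta>' \<in> Psi \<rho> SS" for \<eta>'
  proof -
    obtain rr \<beta> where rr: "\<eta>' = pos_part (\<rho> - rr)" and \<beta>: "\<forall>S\<in>SS. 0 \<le> \<beta> S" "sum \<beta> SS \<le> 1"
      "rr = (\<Sum>S\<in>SS. \<beta> S *\<^sub>R S)"
      using P unfolding Psi_def by blast
    have "e \<bullet> (\<rho> - rr) \<le> e \<bullet> \<eta>'"
      unfolding inner_vec_sum rr pos_part_def using e_nn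
      by (auto intro!: sum_mono mult_left_mono)
    moreover have "e \<bullet> rr \<le> e \<bullet> (\<rho> - \<eta>)"
    proof -
      have "e \<bullet> rr = (\<Sum>S\<in>SS. \<beta> S * (S \<bullet> e))"
        by (simp add: \<beta>(3) inner_sum_right inner_commute)
      also have "\<dots> \<le> (\<Sum>S\<in>SS. \<beta> S * (e \<bullet> (\<rho> - \<eta>)))"
        using \<beta>(1) key by (auto intro!: sum_mono mult_left_mono)
      also have "\<dots> = sum \<beta> SS * (e \<bullet> (\<rho> - \<eta>))" by (simp add: sum_distrib_right)
      also have "\<dots> \<le> e \<bullet> (\<rho> - \<eta>)"
        using mult_right_mono[OF \<beta>(2) e_rho_eta] by simp
      finally show ?thesis .
    qed
    ultimately show ?thesis by (simp add: inner_diff_right)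
  qed
  have W: "y \<bullet> (\<Delta> *v y) = (\<Sum>i\<in>UNIV. d i * (y $ i)^2)" for y
    by (simp add: mv inner_vec_sum power2_eq_square algebra_simps)
  have eW: "e \<bullet> y = (\<Sum>i\<in>UNIV. d i * \<eta> $ i * y $ i)" for y
    by (simp add: inner_vec_sum e_comp)
  have strict: "\<eta> \<bullet> (\<Delta> *v \<eta>) < \<eta>' \<bullet> (\<Delta> *v \<eta>')" if H: "\<eta>' \<in> Psi \<rho> SS" "\<eta>' \<noteq> \<eta>" for \<eta>'
  proof -
    obtain i where i: "\<eta>' $ i \<noteq> \<eta> $ i" using H(2) by (auto simp: vec_eq_iff)
    have pos: "0 < (\<Sum>i\<in>UNIV. d i * (\<eta>' $ i - \<eta> $ i)^2)"
    proof (rule sum_pos2[of _ i])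
      show "0 < d i * (\<eta>' $ i - \<eta> $ i)^2" using i dpos[of i] by simp
      show "0 \<le> d j * (\<eta>' $ j - \<eta> $ j)^2" for j using dpos[of j] by simp
    qed simp_all
    have exp: "(\<Sum>i\<in>UNIV. d i * (\<eta>' $ i - \<eta> $ i)^2) =
      (\<Sum>i\<in>UNIV. d i * (\<eta>' $ i)^2) - 2 * (\<Sum>i\<in>UNIV. d i * \<eta> $ i * \<eta>' $ i) + (\<Sum>i\<in>UNIV. d i * (\<eta> $ i)^2)"
      by (simp add: power2_eq_square algebra_simps sum.distrib sum_subtractf sum_distrib_left)
    have "e \<bullet> \<eta> \<le> e \<bullet> \<eta>'" by (rule mono[OF H(1)])
    then have "(\<Sum>i\<in>UNIV. d i * (\<eta> $ i)^2) \<le> (\<Sum>i\<in>UNIV. d i * \<eta> $ i * \<eta>' $ i)"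
      by (simp add: eW power2_eq_square mult.assoc)
    then show ?thesis unfolding W using pos exp by linarith
  qed
  show ?thesis using inPsi strict by blast
qed

end
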